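(* Let $q$ be an odd prime power, let $n,k$ be positive integers, and let $a,b,\delta\in\mathbb{F}_{q^n}$ with $ab\neq0$. Then $$f(x)=(ax^{q^k}-bx+\delta)^{\frac{q^n+1}{2}}+ax^{q^k}+bx$$ is a permutation polynomial of $\mathbb{F}_{q^n}$ if and only if $ab\in D_0$.
   Context: Let $\alpha$ be a primitive element of $\mathbb{F}_{q^n}$; $D_0=\langle\alpha^2\rangle$ is the multiplicative subgroup generated by $\alpha^2$, i.e. the set of nonzero squares in $\mathbb{F}_{q^n}$. A permutation polynomial of $\mathbb{F}_{q^n}$ is one inducing a bijection of $\mathbb{F}_{q^n}$. *)

theory Defs
  imports "HOL-Computational_Algebra.Primes"
begin

text \<open>D0: the set of nonzero squares of a field, i.e. the subgroup generated by
  the square of a primitive element.\<close>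
definition D0 :: "'a::field set" where
  "D0 = {y. y \<noteq> 0 \<and> (\<exists>z. y = z ^ 2)}"

definition permutation_poly :: "('a \<Rightarrow> 'a) \<Rightarrow> bool" where
  "permutation_poly f = bij f"

end

theory Submission imports "HOL-Number_Theory.Residues" "HOL-Computational_Algebra.Polynomial" Defs begin

lemma fermat_field:
  fixes x :: "'a::{finite,field}"
  assumes "x \<noteq> 0"
  shows "x ^ (card (UNIV :: 'a set) - 1) = 1"
proof -
  have "x * (\<Prod>y\<in>UNIV-{0}. x * y) = x * x ^ (card (UNIV :: 'a set) - 1) * \<Prod>(UNIV-{0::'a})"
    by (simp add: prod.distrib mult_ac)
  moreover have "(\<Prod>y\<in>UNIV-{0}. x * y) = (\<Prod>y\<in>UNIV-{0::'a}. y)"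
    by (rule prod.reindex_bij_witness[of _ "\<lambda>y. y / x" "\<lambda>y. x * y"]) (use assms in auto)
  moreover have "\<Prod>(UNIV-{0::'a}) \<noteq> 0" by simp
  ultimately show ?thesis using assms
    by (metis (no_types, lifting) mult.commute mult_cancel_left mult_cancel_right1)
qed

lemma euler_sq:
  fixes z :: "'a::{finite,field}"
  assumes odd: "odd (card (UNIV :: 'a set))"
    and z: "z ^ ((card (UNIV :: 'a set) - 1) div 2) = 1"
  shows "z \<in> D0"
proof -
  define Q where "Q = card (UNIV :: 'a set)"
  define h where "h = (Q - 1) div 2"
  have Q2: "Q \<ge> 2"
  proof -
    have "card {0::'a, 1} \<le> Q" unfolding Q_def by (rule card_mono) auto
    thus ?thesis by simp
  qed
  have Qh: "Q = 2 * h + 1" using odd Q2 unfolding h_def Q_def[symmetric] by presburger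
  have h1: "h \<ge> 1" using Qh Q2 odd unfolding Q_def[symmetric] by presburger
  define S where "S = (\<lambda>w. w ^ 2) ` (UNIV - {0::'a})"
  define R where "R = {x::'a. x ^ h = 1}"
  have SR: "S \<subseteq> R"
  proof
    fix s assume "s \<in> S"
    then obtain w where w: "w \<noteq> 0" "s = w ^ 2" unfolding S_def by auto
    have "s ^ h = w ^ (Q - 1)" using w Qh by (simp add: power_mult[symmetric])
    also have "\<dots> = 1" using fermat_field[OF w(1)] unfolding Q_def .
    finally show "s \<in> R" unfolding R_def by simp
  qed
  define p where "p = monom (1::'a) h - [:1:]"
  have pp: "poly p x = x ^ h - 1" for x unfolding p_def by (simp add: poly_monom)
  have "p \<noteq> 0"
  proof
    assume "p = 0"
    hence "poly p 0 = 0" by simp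
    thus False using pp[of 0] h1 by (simp add: power_0_left)
  qed
  have "degree p \<le> h" unfolding p_def
    by (intro degree_diff_le) (auto simp: degree_monom_le)
  have RR: "R = {x. poly p x = 0}" unfolding R_def using pp by auto
  have cR: "card R \<le> h" unfolding RR using card_poly_roots_bound[OF \<open>p \<noteq> 0\<close>] \<open>degree p \<le> h\<close> by linarith
  define r where "r = (\<lambda>s. SOME w::'a. w \<noteq> 0 \<and> w ^ 2 = s)"
  have cov: "UNIV - {0::'a} \<subseteq> r ` S \<union> (\<lambda>s. - r s) ` S"
  proof
    fix w :: 'a assume "w \<in> UNIV - {0}"
    hence w: "w \<noteq> 0" by simp
    let ?s = "w ^ 2"
    have sS: "?s \<in> S" using w unfolding S_def by auto
    have "r ?s \<noteq> 0 \<and> r ?s ^ 2 = ?s" unfolding r_def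
      by (rule someI_ex) (use w in auto)
    hence "(r ?s - w) * (r ?s + w) = 0" by (simp add: algebra_simps power2_eq_square)
    hence "r ?s - w = 0 \<or> r ?s + w = 0" by simp
    hence "w = r ?s \<or> w = - r ?s" by (auto simp: add_eq_0_iff)
    thus "w \<in> r ` S \<union> (\<lambda>s. - r s) ` S" using sS by auto
  qed
  have "card (UNIV - {0::'a}) \<le> card (r ` S \<union> (\<lambda>s. - r s) ` S)"
    by (rule card_mono[OF _ cov]) auto
  also have "\<dots> \<le> card (r ` S) + card ((\<lambda>s. - r s) ` S)" by (rule card_Un_le)
  also have "\<dots> \<le> card S + card S" by (intro add_mono card_image_le) auto
  finally have "Q - 1 \<le> 2 * card S" unfolding Q_def by simp
  hence "h \<le> card S" using Qh by simp
  moreover have "card S \<le> card R" by (rule card_mono[OF _ SR]) auto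
  ultimately have "card S = card R" using cR by simp
  hence "S = R" using SR by (intro card_subset_eq) auto
  moreover have "z \<in> R" using z unfolding R_def h_def Q_def by simp
  ultimately have "z \<in> S" by simp
  thus ?thesis unfolding S_def D0_def by auto
qed


theorem mainTheorem11:
  fixes q n k :: nat and a b \<delta> :: "'a::{finite,field}"
  assumes "\<exists>p m. prime p \<and> m > 0 \<and> q = p ^ m"
    and "odd q"
    and "n > 0" and "k > 0"
    and "card (UNIV :: 'a set) = q ^ n"
    and "a * b \<noteq> 0"
  shows "permutation_poly
           (\<lambda>x. (a * x ^ (q ^ k) - b * x + \<delta>) ^ ((q ^ n + 1) div 2) + a * x ^ (q ^ k) + b * x)
         \<longleftrightarrow> a * b \<in> D0"
proof -
  obtain p m where pm: "prime p" "m > 0" "q = p ^ m" using assms(1) by blast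
  define Q where "Q = card (UNIV :: 'a set)"
  have Qq: "q ^ n = Q" using assms(5) unfolding Q_def by simp
  have oddQ: "odd Q" using assms(2) Qq[symmetric] by simp
  have Q2: "Q \<ge> 2"
  proof -
    have "card {0::'a, 1} \<le> Q" unfolding Q_def by (rule card_mono) auto
    thus ?thesis by simp
  qed
  define h where "h = (Q - 1) div 2"
  have Qh: "Q = 2 * h + 1" using oddQ Q2 unfolding h_def by presburger
  have h1: "h \<ge> 1" using Qh Q2 oddQ by presburger
  have Qh2: "(q ^ n + 1) div 2 = Suc h" using Qq Qh by simp
  have cpos: "CHAR('a) > 0" by (rule finite_imp_CHAR_pos) simp
  have cprime: "prime CHAR('a)" by (rule prime_CHAR_semidom[OF cpos])
  have "CHAR('a) dvd Q" unfolding Q_def by (rule CHAR_dvd_CARD)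
  hence "CHAR('a) dvd p ^ (m * n)" using Qq pm(3) by (simp add: power_mult)
  hence "CHAR('a) dvd p" using cprime prime_dvd_power by blast
  hence cp: "CHAR('a) = p" using cprime pm(1) by (simp add: primes_dvd_imp_eq)
  define N where "N = q ^ k"
  have NC: "N = CHAR('a) ^ (m * k)" unfolding N_def cp pm(3) by (simp add: power_mult)
  have oddN: "odd N" unfolding N_def using assms(2) by simp
  define \<sigma> where "\<sigma> = (\<lambda>x::'a. x ^ N)"
  have sadd: "\<sigma> (x + y) = \<sigma> x + \<sigma> y" for x y
    unfolding \<sigma>_def by (rule freshmans_dream'[OF cprime NC])
  have ssub: "\<sigma> (x - y) = \<sigma> x - \<sigma> y" for x y
    using sadd[of "x - y" y] by (simp add: algebra_simps)
  have s0: "\<sigma> t = 0 \<longleftrightarrow> t = 0" for t unfolding \<sigma>_def using oddN by (auto simp: power_0_left intro: odd_pos)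
  have two: "(2::'a) \<noteq> 0"
  proof
    assume "(2::'a) = 0"
    hence "of_nat 2 = (0::'a)" by simp
    hence "CHAR('a) dvd 2" using of_nat_eq_0_iff_char_dvd by blast
    hence "p dvd 2" using cp by simp
    hence "p = 2" using pm(1) dvd_imp_le[of p 2] prime_gt_1_nat[of p] by linarith
    thus False using assms(2) pm by simp
  qed
  define \<eta> where "\<eta> = (\<lambda>x::'a. x ^ h)"
  have eta_pm: "\<eta> x = 1 \<or> \<eta> x = -1" if "x \<noteq> 0" for x
  proof -
    have "\<eta> x ^ 2 = x ^ (Q - 1)" unfolding \<eta>_def using Qh by (simp add: power_mult[symmetric] mult.commute)
    also have "\<dots> = 1" using fermat_field[OF that] unfolding Q_def .
    finally show ?thesis by (simp add: power2_eq_1_iff)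
  qed
  have eta0: "\<eta> 0 = 0" unfolding \<eta>_def using h1 by (simp add: power_0_left)
  have eta_mult: "\<eta> (x * y) = \<eta> x * \<eta> y" for x y unfolding \<eta>_def by (simp add: power_mult_distrib)
  have eta_sig: "\<eta> (\<sigma> t) = \<eta> t" for t
  proof (cases "t = 0")
    case True thus ?thesis using s0[of 0] by simp
  next
    case False
    have "\<eta> (\<sigma> t) = \<eta> t ^ N" unfolding \<eta>_def \<sigma>_def by (simp add: power_mult[symmetric] mult.commute)
    thus ?thesis using eta_pm[OF False] oddN by auto
  qed
  have eta_inv: "\<eta> (inverse t) = \<eta> t" for t
  proof (cases "t = 0")
    case True thus ?thesis by simp
  next
    case False
    have "\<eta> (inverse t) = inverse (\<eta> t)" unfolding \<eta>_def by (simp add: power_inverse)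
    thus ?thesis using eta_pm[OF False] by auto
  qed
  have sqD0: "z \<in> D0 \<longleftrightarrow> \<eta> z = 1" for z
  proof
    assume "z \<in> D0"
    then obtain w where w: "w \<noteq> 0" "z = w ^ 2" unfolding D0_def by auto
    have "\<eta> z = w ^ (Q - 1)" unfolding \<eta>_def using w Qh by (simp add: power_mult[symmetric])
    thus "\<eta> z = 1" using fermat_field[OF w(1)] unfolding Q_def by simp
  next
    assume "\<eta> z = 1"
    thus "z \<in> D0" using euler_sq[of z] oddQ unfolding \<eta>_def h_def Q_def by simp
  qed
  define U where "U = (\<lambda>x. a * \<sigma> x - b * x + \<delta>)"
  define f where "f = (\<lambda>x. (a * x ^ (q ^ k) - b * x + \<delta>) ^ ((q ^ n + 1) div 2) + a * x ^ (q ^ k) + b * x)"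
  have fval: "f x = (if \<eta> (U x) = 1 then 2 * a * \<sigma> x + \<delta> else 2 * b * x - \<delta>)" for x
  proof -
    have f1: "f x = U x * \<eta> (U x) + a * \<sigma> x + b * x"
      unfolding f_def Qh2 U_def \<eta>_def \<sigma>_def N_def by simp
    show ?thesis
    proof (cases "U x = 0")
      case True
      thus ?thesis using f1 eta0 unfolding U_def by (simp add: algebra_simps)
    next
      case False
      from eta_pm[OF False] show ?thesis
      proof
        assume e: "\<eta> (U x) = 1"
        show ?thesis unfolding f1 e unfolding U_def by (simp add: algebra_simps)
      next
        assume e: "\<eta> (U x) = -1"
        show ?thesis unfolding f1 e unfolding U_def by (simp add: algebra_simps)
      qed
    qed
  qed
  have a0: "a \<noteq> 0" and b0: "b \<noteq> 0" using assms(6) by auto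
  have "bij f \<longleftrightarrow> a * b \<in> D0"
  proof
    assume "a * b \<in> D0"
    hence ab: "\<eta> a * \<eta> b = 1" using sqD0 eta_mult by simp
    have mixed: False if x1: "\<eta> (U x) = 1" and y1: "\<eta> (U y) \<noteq> 1"
      and eq: "2 * a * \<sigma> x + \<delta> = 2 * b * y - \<delta>" for x y
    proof -
      have "2 * (b * y) = 2 * (a * \<sigma> x + \<delta>)" using eq by (simp add: algebra_simps)
      hence byx: "b * y = a * \<sigma> x + \<delta>" using two mult_left_cancel by (metis (no_types))
      have ux: "U x = b * (y - x)" unfolding U_def using byx by (simp add: algebra_simps)
      have "U y = a * (\<sigma> y - \<sigma> x)" unfolding U_def using byx by (simp add: algebra_simps)
      hence uy: "U y = a * \<sigma> (y - x)" using ssub[of y x] by simp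
      have "\<eta> (U y) = \<eta> (U y) * \<eta> (U x)" using x1 by simp
      also have "\<dots> = (\<eta> a * \<eta> b) * (\<eta> (y - x) * \<eta> (y - x))"
        unfolding ux uy eta_mult eta_sig by (simp add: algebra_simps)
      also have "\<eta> (y - x) * \<eta> (y - x) = 1"
      proof -
        have yx: "y - x \<noteq> 0" using x1 ux eta0 by auto
        show ?thesis using eta_pm[OF yx] by auto
      qed
      finally show False using ab y1 by simp
    qed
    have "inj f"
    proof (rule injI)
      fix x y assume e: "f x = f y"
      show "x = y"
      proof (cases "\<eta> (U x) = 1"; cases "\<eta> (U y) = 1")
        assume "\<eta> (U x) = 1" "\<eta> (U y) = 1"
        hence "2 * a * \<sigma> x = 2 * a * \<sigma> y" using e fval by simp
        hence "\<sigma> (x - y) = 0" using two a0 ssub by simp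
        thus ?thesis using s0 by simp
      next
        assume "\<eta> (U x) \<noteq> 1" "\<eta> (U y) \<noteq> 1"
        hence "2 * b * x = 2 * b * y" using e fval by simp
        thus ?thesis using two b0 by simp
      next
        assume "\<eta> (U x) = 1" "\<eta> (U y) \<noteq> 1"
        thus ?thesis using mixed[of x y] e fval by simp
      next
        assume "\<eta> (U x) \<noteq> 1" "\<eta> (U y) = 1"
        thus ?thesis using mixed[of y x] e fval by simp
      qed
    qed
    thus "bij f" by (simp add: bij_def finite_UNIV_inj_surj)
  next
    assume bf: "bij f"
    show "a * b \<in> D0"
    proof (rule ccontr)
      assume nab: "a * b \<notin> D0"
      hence ab: "\<eta> a * \<eta> b = -1" using sqD0 eta_mult eta_pm[OF assms(6)] by auto
      define L where "L = (\<lambda>x. a * \<sigma> x - b * x)"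
      have "inj L"
      proof (rule injI)
        fix x y assume e: "L x = L y"
        show "x = y"
        proof (rule ccontr)
          assume "x \<noteq> y"
          define t where "t = x - y"
          have t0: "t \<noteq> 0" using \<open>x \<noteq> y\<close> unfolding t_def by simp
          have "a * (\<sigma> x - \<sigma> y) = b * (x - y)" using e unfolding L_def by (simp add: algebra_simps)
          hence "a * \<sigma> t = b * t" unfolding t_def using ssub[of x y] by simp
          obtain j where j: "N = Suc (2 * j)" using oddN oddE by (metis Suc_eq_plus1)
          have "a * t ^ (2 * j) * t = b * t" using \<open>a * \<sigma> t = b * t\<close> unfolding \<sigma>_def j
            by (simp add: algebra_simps)
          hence "a * t ^ (2 * j) = b" using t0 by simp
          hence "a * b = a * (a * t ^ (2 * j))" by simp
          also have "\<dots> = (a * t ^ j) ^ 2" by (simp add: power_mult power2_eq_square power_mult_distrib algebra_simps)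
          finally have "a * b = (a * t ^ j) ^ 2" .
          hence "a * b \<in> D0" unfolding D0_def using assms(6) by auto
          thus False using nab by simp
        qed
      qed
      hence "surj L" by (simp add: finite_UNIV_inj_surj)
      then obtain x where x: "L x = 1 - \<delta>" by (metis surjD)
      define y where "y = x + inverse b"
      have ux: "U x = 1" using x unfolding U_def L_def by simp
      have uy: "U y = a * \<sigma> (inverse b)" unfolding U_def y_def using x sadd b0
        unfolding L_def by (simp add: algebra_simps)
      have "\<eta> (U y) = -1" unfolding uy eta_mult eta_sig eta_inv using ab by simp
      hence fy: "f y = 2 * b * y - \<delta>" using fval by simp
      have fx: "f x = 2 * a * \<sigma> x + \<delta>" using fval[of x] ux by (simp add: \<eta>_def)
      have ax: "a * \<sigma> x = 1 + b * x - \<delta>" using x unfolding L_def by (simp add: algebra_simps)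
      have "2 * b * y - \<delta> = 2 * (b * x) + 2 * (b * inverse b) - \<delta>" unfolding y_def by (simp add: algebra_simps)
      also have "\<dots> = 2 * (b * x) + 2 - \<delta>" using b0 by simp
      also have "\<dots> = 2 * (a * \<sigma> x) + \<delta>" unfolding ax by (simp add: algebra_simps)
      finally have "2 * b * y - \<delta> = 2 * a * \<sigma> x + \<delta>" by simp
      hence "f x = f y" using fx fy by simp
      moreover have "x \<noteq> y" unfolding y_def using b0 by simp
      ultimately show False using bf by (metis bij_def injD)
    qed
  qed
  thus ?thesis unfolding permutation_poly_def f_def .
qed

end
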